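(* Let $f(\cdot\,;z)$ be non-negative and $\beta$-smooth for every $z\in\mathcal{Z}$, let $A$ be any symmetric deterministic algorithm, and suppose $\epsilon_{\mathbf{c}}=0$ (memorization of the training set is feasible). Then $$|\epsilon_{\mathrm{gen}}|\le 2\sqrt{2\beta\,\epsilon_{\mathrm{opt}}\,\epsilon_{\mathrm{stab}(A)}}+2\beta\,\epsilon_{\mathrm{stab}(A)},$$ and consequently $|\epsilon_{\mathrm{gen}}|=\mathcal{O}\big(\max\{\sqrt{\epsilon_{\mathrm{opt}}\epsilon_{\mathrm{stab}(A)}},\ \epsilon_{\mathrm{stab}(A)}\}\big)$.
   Context: Let $\mathcal{D}$ be an unknown distribution on an example space $\mathcal{Z}$, and let $z_1,\dots,z_n,z_1',\dots,z_n'$ be i.i.d. samples from $\mathcal{D}$. Set $S=(z_1,\dots,z_n)$ and, for $i\in\{1,\dots,n\}$, $S^{(i)}=(z_1,\dots,z_{i-1},z_i',z_{i+1},\dots,z_n)$. The loss is $f:\mathbb{R}^d\times\mathcal{Z}\to[0,\infty)$; $\beta$-smooth means $\|\nabla_w f(w,z)-\nabla_w f(u,z)\|_2\le\beta\|w-u\|_2$ for all $w,u$. Population risk $R(w)=\mathbb{E}_{Z\sim\mathcal{D}}[f(w,Z)]$; empirical risk $R_S(w)=\frac1n\sum_{j=1}^n f(w,z_j)$; $W^*_S$ is a minimizer of $R_S$ (assumed to exist). A deterministic algorithm $A$ maps a dataset to $A(S)\in\mathbb{R}^d$; it is symmetric if its output is unchanged under permutations of the dataset. Definitions: $\epsilon_{\mathrm{gen}}=\mathbb{E}[R(A(S))-R_S(A(S))]$;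 $\epsilon_{\mathrm{stab}(A)}=\mathbb{E}[\|A(S)-A(S^{(i)})\|_2^2]$; $\epsilon_{\mathrm{opt}}=\mathbb{E}[R_S(A(S))-R_S(W^*_S)]$; $\epsilon_{\mathbf{c}}=\mathbb{E}[R_S(W^*_S)]$. *)

theory Defs
  imports "HOL-Probability.Probability"
begin

text \<open>Datasets are lists of examples. The sample space carries the two
  independent i.i.d. samples (z_1..z_n) and (z_1'..z_n') drawn from D.\<close>

definition sample_space :: "'z measure \<Rightarrow> nat \<Rightarrow> ((nat \<Rightarrow> 'z) \<times> (nat \<Rightarrow> 'z)) measure" where
  "sample_space D n = (\<Pi>\<^sub>M j\<in>{..<n}. D) \<Otimes>\<^sub>M (\<Pi>\<^sub>M j\<in>{..<n}. D)"

definition dataset_S :: "nat \<Rightarrow> (nat \<Rightarrow> 'z) \<times> (nat \<Rightarrow> 'z) \<Rightarrow> 'z list" where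
  "dataset_S n \<omega> = map (fst \<omega>) [0..<n]"

definition dataset_Si :: "nat \<Rightarrow> nat \<Rightarrow> (nat \<Rightarrow> 'z) \<times> (nat \<Rightarrow> 'z) \<Rightarrow> 'z list" where
  "dataset_Si n i \<omega> = (map (fst \<omega>) [0..<n])[i := snd \<omega> i]"

definition pop_risk :: "'z measure \<Rightarrow> ('a \<Rightarrow> 'z \<Rightarrow> real) \<Rightarrow> 'a \<Rightarrow> real" where
  "pop_risk D f w = (\<integral>z. f w z \<partial>D)"

definition emp_risk :: "('a \<Rightarrow> 'z \<Rightarrow> real) \<Rightarrow> 'z list \<Rightarrow> 'a \<Rightarrow> real" where
  "emp_risk f S w = (\<Sum>z\<leftarrow>S. f w z) / real (length S)"

definition smooth :: "real \<Rightarrow> ('a::euclidean_space \<Rightarrow> real) \<Rightarrow> bool" where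
  "smooth \<beta> g \<longleftrightarrow> (\<exists>grad. (\<forall>w. (g has_derivative (\<lambda>h. grad w \<bullet> h)) (at w)) \<and>
       (\<forall>w u. norm (grad w - grad u) \<le> \<beta> * norm (w - u)))"

definition symmetric_alg :: "('z list \<Rightarrow> 'a) \<Rightarrow> bool" where
  "symmetric_alg A \<longleftrightarrow> (\<forall>xs ys. mset xs = mset ys \<longrightarrow> A xs = A ys)"

definition eps_gen where
  "eps_gen D f A n = (\<integral>\<omega>. pop_risk D f (A (dataset_S n \<omega>))
      - emp_risk f (dataset_S n \<omega>) (A (dataset_S n \<omega>)) \<partial>sample_space D n)"

definition eps_stab where
  "eps_stab D A n i = (\<integral>\<omega>. (norm (A (dataset_S n \<omega>) - A (dataset_Si n i \<omega>)))\<^sup>2 \<partial>sample_space D n)"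

definition eps_opt where
  "eps_opt D f A W n = (\<integral>\<omega>. emp_risk f (dataset_S n \<omega>) (A (dataset_S n \<omega>))
      - emp_risk f (dataset_S n \<omega>) (W (dataset_S n \<omega>)) \<partial>sample_space D n)"

definition eps_c where
  "eps_c D f W n = (\<integral>\<omega>. emp_risk f (dataset_S n \<omega>) (W (dataset_S n \<omega>)) \<partial>sample_space D n)"

end

theory Submission
  imports Defs
begin


lemma smooth_descent:
  fixes g :: "'a::euclidean_space \<Rightarrow> real"
  assumes der: "\<And>w. (g has_derivative (\<lambda>h. grad w \<bullet> h)) (at w)"
    and lip: "\<And>w u. norm (grad w - grad u) \<le> \<beta> * norm (w - u)"
  shows "g u \<le> g w + grad w \<bullet> (u - w) + \<beta> / 2 * (norm (u - w))\<^sup>2"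
proof -
  define d where "d = u - w"
  define \<psi> where "\<psi> t = g (w + t *\<^sub>R d) - t * (grad w \<bullet> d) - \<beta> / 2 * t\<^sup>2 * (norm d)\<^sup>2" for t :: real
  have D: "(\<psi> has_real_derivative (grad (w + t *\<^sub>R d) \<bullet> d - grad w \<bullet> d - \<beta> * t * (norm d)\<^sup>2)) (at t)" for t
  proof -
    have l: "((\<lambda>t. w + t *\<^sub>R d) has_derivative (\<lambda>h. h *\<^sub>R d)) (at t)"
      by (auto intro!: derivative_eq_intros)
    have c: "((\<lambda>t. g (w + t *\<^sub>R d)) has_derivative (\<lambda>h. grad (w + t *\<^sub>R d) \<bullet> (h *\<^sub>R d))) (at t)"
      using has_derivative_compose[OF l der] by simp
    have c': "((\<lambda>t. g (w + t *\<^sub>R d)) has_real_derivative (grad (w + t *\<^sub>R d) \<bullet> d)) (at t)"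
      by (rule has_derivative_imp_has_field_derivative[OF c]) (simp add: inner_scaleR_right)
    show ?thesis unfolding \<psi>_def
      by (rule derivative_eq_intros c' | simp)+
  qed
  have "\<psi> 1 \<le> \<psi> 0"
  proof (rule DERIV_nonpos_imp_nonincreasing[of 0 1])
    fix t :: real assume t: "0 \<le> t" "t \<le> 1"
    have "(grad (w + t *\<^sub>R d) - grad w) \<bullet> d \<le> norm (grad (w + t *\<^sub>R d) - grad w) * norm d"
      by (rule norm_cauchy_schwarz)
    also have "\<dots> \<le> \<beta> * norm (t *\<^sub>R d) * norm d"
      using lip[of "w + t *\<^sub>R d" w] by (intro mult_right_mono) auto
    also have "\<dots> = \<beta> * t * (norm d)\<^sup>2" using t by (simp add: power2_eq_square)
    finally have "grad (w + t *\<^sub>R d) \<bullet> d - grad w \<bullet> d - \<beta> * t * (norm d)\<^sup>2 \<le> 0"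
      by (simp add: inner_diff_left)
    then show "\<exists>y. (\<psi> has_real_derivative y) (at t) \<and> y \<le> 0" using D by blast
  qed simp
  then show ?thesis unfolding \<psi>_def d_def by simp
qed

lemma smooth_beta_nonneg:
  assumes "smooth \<beta> (g :: 'a::euclidean_space \<Rightarrow> real)"
  shows "0 \<le> \<beta>"
proof -
  obtain grad :: "'a \<Rightarrow> 'a" where lip: "\<And>w u. norm (grad w - grad (u::'a)) \<le> \<beta> * norm (w - u)"
    using assms unfolding smooth_def by blast
  obtain b :: 'a where b: "b \<in> Basis" using nonempty_Basis by blast
  have "0 \<le> \<beta> * norm (b - 0)" using lip[of b 0] norm_ge_zero order_trans by blast
  then show ?thesis using b by simp
qed

lemma smooth_key:
  fixes g :: "'a::euclidean_space \<Rightarrow> real"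
  assumes sm: "smooth \<beta> g" and nn: "\<And>w. g w \<ge> 0" and lam: "l > 0"
  shows "g u - g w \<le> l * \<beta> * g w + (1 / (2 * l) + \<beta> / 2) * (norm (u - w))\<^sup>2"
proof -
  obtain grad where der: "\<And>w. (g has_derivative (\<lambda>h. grad w \<bullet> h)) (at w)"
    and lip: "\<And>w u. norm (grad w - grad u) \<le> \<beta> * norm (w - u)"
    using sm unfolding smooth_def by blast
  have b0: "0 \<le> \<beta>" using smooth_beta_nonneg[OF sm] .
  define G where "G = grad w"
  have desc: "\<And>u. g u \<le> g w + G \<bullet> (u - w) + \<beta> / 2 * (norm (u - w))\<^sup>2"
    unfolding G_def by (rule smooth_descent[OF der lip])
  have selfb: "(norm G)\<^sup>2 \<le> 2 * \<beta> * g w"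
  proof -
    have st: "t * (norm G)\<^sup>2 - \<beta> / 2 * t\<^sup>2 * (norm G)\<^sup>2 \<le> g w" for t
    proof -
      have "0 \<le> g (w - t *\<^sub>R G)" by (rule nn)
      also have "\<dots> \<le> g w + G \<bullet> (- (t *\<^sub>R G)) + \<beta> / 2 * (norm (- (t *\<^sub>R G)))\<^sup>2"
        using desc[of "w - t *\<^sub>R G"] by simp
      also have "\<dots> = g w - t * (norm G)\<^sup>2 + \<beta> / 2 * t\<^sup>2 * (norm G)\<^sup>2"
        by (simp add: power2_norm_eq_inner power_mult_distrib inner_commute)
      finally show ?thesis by simp
    qed
    show ?thesis
    proof (cases "\<beta> = 0")
      case True
      show ?thesis
      proof (rule ccontr)
        assume "\<not> ?thesis"
        then have p: "(norm G)\<^sup>2 > 0" using True nn[of w] by simp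
        have "(g w + 1) / (norm G)\<^sup>2 * (norm G)\<^sup>2 \<le> g w" using st[of "(g w + 1) / (norm G)\<^sup>2"] True by simp
        then show False using p by simp
      qed
    next
      case False
      then have bp: "\<beta> > 0" using b0 by simp
      have "1 / \<beta> * (norm G)\<^sup>2 - \<beta> / 2 * (1 / \<beta>)\<^sup>2 * (norm G)\<^sup>2 \<le> g w" by (rule st)
      then have "(norm G)\<^sup>2 / (2 * \<beta>) \<le> g w" using bp by (simp add: field_simps power2_eq_square)
      then show ?thesis using bp by (simp add: field_simps)
    qed
  qed
  have "G \<bullet> (u - w) \<le> norm G * norm (u - w)" by (rule norm_cauchy_schwarz)
  also have "\<dots> \<le> (l * (norm G)\<^sup>2 + (norm (u - w))\<^sup>2 / l) / 2"
  proof -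
    have "0 \<le> (l * norm G - norm (u - w))\<^sup>2" by simp
    then have "2 * l * (norm G * norm (u - w)) \<le> l\<^sup>2 * (norm G)\<^sup>2 + (norm (u - w))\<^sup>2"
      by (simp add: power2_eq_square algebra_simps)
    then show ?thesis using lam by (simp add: field_simps power2_eq_square)
  qed
  also have "\<dots> \<le> (l * (2 * \<beta> * g w) + (norm (u - w))\<^sup>2 / l) / 2"
    using selfb lam by (simp add: mult_left_mono)
  finally have "G \<bullet> (u - w) \<le> l * \<beta> * g w + (norm (u - w))\<^sup>2 / (2 * l)" by simp
  then show ?thesis using desc[of u] by (simp add: algebra_simps)
qed



lemma final_real:
  fixes G b p s :: real
  assumes b: "b \<ge> 0" and p: "p \<ge> 0" and s: "s \<ge> 0"
    and H: "\<And>l. l > 0 \<Longrightarrow> G \<le> l * b * p + (1 / (2 * l) + b / 2) * s"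
  shows "G \<le> 2 * sqrt (2 * b * p * s) + 2 * b * s"
proof -
  define r where "r = sqrt (2 * b * p * s)"
  have r0: "r \<ge> 0" unfolding r_def using b p s by simp
  have rr: "r\<^sup>2 = 2 * b * p * s" unfolding r_def using b p s by simp
  have bs: "0 \<le> b * s" using b s by simp
  show ?thesis
  proof (cases "r > 0")
    case True
    then have sp: "s > 0" using rr s by (cases "s = 0") auto
    define l where "l = s / r"
    have lp: "l > 0" unfolding l_def using True sp by simp
    have "l * b * p = r / 2"
      unfolding l_def using True rr by (simp add: field_simps power2_eq_square)
    moreover have "1 / (2 * l) * s = r / 2"
      unfolding l_def using True sp by (simp add: field_simps)
    ultimately have "G \<le> r + b / 2 * s" using H[OF lp] by (simp add: algebra_simps)
    then show ?thesis unfolding r_def[symmetric] using r0 bs by simp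
  next
    case False
    then have "r = 0" using r0 by simp
    then have z: "b * p = 0 \<or> s = 0" using rr by simp
    show ?thesis
    proof (rule ccontr)
      assume nc: "\<not> ?thesis"
      then have e: "G - b * s / 2 > 0" using r0 bs \<open>r = 0\<close> unfolding r_def by simp
      from z show False
      proof
        assume bo: "b * p = 0"
        define l where "l = (s + 1) / (G - b * s / 2)"
        have lp: "l > 0" unfolding l_def using e s by simp
        have "G \<le> (1 / (2 * l) + b / 2) * s" using H[OF lp] bo by (metis add_0 mult.assoc mult_zero_right)
        then have "G - b * s / 2 \<le> s / (2 * l)" by (simp add: algebra_simps)
        also have "\<dots> = s * (G - b * s / 2) / (2 * (s + 1))" unfolding l_def using e by (simp add: field_simps)
        also have "\<dots> < G - b * s / 2" proof - have "s * (G - b * s / 2) < 2 * (s + 1) * (G - b * s / 2)" using e s by (intro mult_strict_right_mono) auto then show ?thesis using s by (simp add: divide_less_eq mult.commute) qed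
        finally show False by simp
      next
        assume s0: "s = 0"
        define l where "l = G / (2 * (b * p + 1))"
        have bo: "b * p \<ge> 0" using b p by simp
        have gp: "G > 0" using e s0 by simp
        have lp: "l > 0" unfolding l_def using gp bo by simp
        have "G \<le> l * b * p" using H[OF lp] s0 by simp
        also have "\<dots> = G * (b * p) / (2 * (b * p + 1))" unfolding l_def by (simp add: field_simps)
        also have "\<dots> < G" using gp bo by (simp add: field_simps add_nonneg_pos)
        finally show False by simp
      qed
    qed
  qed
qed

lemma final_max:
  fixes b p s :: real
  assumes b: "b \<ge> 0" and p: "p \<ge> 0" and s: "s \<ge> 0"
  shows "2 * sqrt (2 * b * p * s) + 2 * b * s \<le> (2 * sqrt (2 * b) + 2 * b) * max (sqrt (p * s)) s"
proof -
  have "sqrt (2 * b * p * s) = sqrt (2 * b) * sqrt (p * s)" by (simp add: real_sqrt_mult mult.assoc)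
  also have "\<dots> \<le> sqrt (2 * b) * max (sqrt (p * s)) s" using b by (intro mult_left_mono) auto
  finally have 1: "sqrt (2 * b * p * s) \<le> sqrt (2 * b) * max (sqrt (p * s)) s" .
  have 2: "b * s \<le> b * max (sqrt (p * s)) s" using b by (intro mult_left_mono) auto
  show ?thesis using 1 2 by (simp add: algebra_simps)
qed



lemma map_upt_update: "i < n \<Longrightarrow> (map x [0..<n])[i := c] = map (x(i := c)) [0..<n]"
  by (rule nth_equalityI) (auto simp: nth_list_update)

lemma measurable_upd_same:
  assumes "i \<in> I"
  shows "(\<lambda>(x, c). x(i := c)) \<in> measurable (Pi\<^sub>M I M \<Otimes>\<^sub>M M i) (Pi\<^sub>M I M)"
  using measurable_add_dim[of i I M] assms by (simp add: insert_absorb)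

locale setting =
  fixes D :: "'z measure" and f :: "'a::euclidean_space \<Rightarrow> 'z \<Rightarrow> real"
    and A :: "'z list \<Rightarrow> 'a" and n i :: nat
  assumes D: "prob_space D"
    and i: "i < n"
    and f_meas: "(\<lambda>(w, z). f w z) \<in> borel_measurable (borel \<Otimes>\<^sub>M D)"
    and A_meas: "(\<lambda>s. A (map s [0..<n])) \<in> borel_measurable (\<Pi>\<^sub>M j\<in>{..<n}. D)"
begin

abbreviation "P \<equiv> (\<Pi>\<^sub>M j\<in>{..<n}. D)"

lemma fcomp[measurable]:
  assumes "g \<in> borel_measurable M" "h \<in> measurable M D"
  shows "(\<lambda>x. f (g x) (h x)) \<in> borel_measurable M"
  using measurable_compose[OF measurable_Pair[OF assms] f_meas] by simp

lemma AS_meas[measurable]: "(\<lambda>s. A (map s [0..<n])) \<in> borel_measurable P"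
  by (rule A_meas)

lemma comp_i[measurable]: "(\<lambda>x. x i) \<in> measurable P D"
  using i by (intro measurable_component_singleton) auto

lemma upd_meas[measurable]: "(\<lambda>(x, c). x(i := c)) \<in> measurable (P \<Otimes>\<^sub>M D) P"
  using measurable_upd_same[of i "{..<n}" "\<lambda>j. D"] i by auto

lemma upd_meas'[measurable]: "(\<lambda>\<omega>. (fst \<omega>)(i := snd \<omega> i)) \<in> measurable (P \<Otimes>\<^sub>M P) P"
proof -
  have "(\<lambda>\<omega>. (fst \<omega>, snd \<omega> i)) \<in> measurable (P \<Otimes>\<^sub>M P) (P \<Otimes>\<^sub>M D)"
    using i by measurable
  from measurable_compose[OF this upd_meas] show ?thesis by simp
qed

lemma b_meas: "(\<lambda>\<omega>. f (A (dataset_Si n i \<omega>)) (fst \<omega> i)) \<in> borel_measurable (P \<Otimes>\<^sub>M P)"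
proof -
  have "(\<lambda>\<omega>. f (A (map ((fst \<omega>)(i := snd \<omega> i)) [0..<n])) (fst \<omega> i)) \<in> borel_measurable (P \<Otimes>\<^sub>M P)"
    using i by measurable
  then show ?thesis unfolding dataset_Si_def by (simp add: map_upt_update[OF i])
qed

lemma upd1_meas: "x \<in> space P \<Longrightarrow> (\<lambda>c. x(i := c)) \<in> measurable D P"
  using measurable_compose_Pair1[OF _ upd_meas, of x] by simp

lemma resample:
  assumes g[measurable]: "g \<in> borel_measurable P"
  shows "(\<integral>\<^sup>+x. \<integral>\<^sup>+c. g (x(i := c)) \<partial>D \<partial>P) = integral\<^sup>N P g"
proof -
  interpret D: prob_space D by (rule D)
  interpret ps: product_sigma_finite "\<lambda>_. D"
    by (simp add: product_sigma_finite_def D.sigma_finite_measure_axioms)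
  define I' where "I' = {..<n} - {i}"
  have eq: "{..<n} = insert i I'" "finite I'" "i \<notin> I'" using i by (auto simp: I'_def)
  have gu: "(\<lambda>(x, c). g (x(i := c))) \<in> borel_measurable (P \<Otimes>\<^sub>M D)"
    using measurable_compose[OF upd_meas g] by (simp add: split_beta')
  have h_meas: "(\<lambda>x. \<integral>\<^sup>+c. g (x(i := c)) \<partial>D) \<in> borel_measurable P"
    using gu by measurable
  have 1: "integral\<^sup>N P g = (\<integral>\<^sup>+x. \<integral>\<^sup>+c. g (x(i := c)) \<partial>D \<partial>(Pi\<^sub>M I' (\<lambda>_. D)))"
    using ps.product_nn_integral_insert[of I' i g] eq g by simp
  have 2: "(\<integral>\<^sup>+x. \<integral>\<^sup>+c. g (x(i := c)) \<partial>D \<partial>P) = 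
     (\<integral>\<^sup>+x. \<integral>\<^sup>+y. \<integral>\<^sup>+c. g (x(i := y, i := c)) \<partial>D \<partial>D \<partial>(Pi\<^sub>M I' (\<lambda>_. D)))"
    using ps.product_nn_integral_insert[of I' i "\<lambda>x. \<integral>\<^sup>+c. g (x(i := c)) \<partial>D"] eq h_meas by simp
  also have "\<dots> = (\<integral>\<^sup>+x. \<integral>\<^sup>+c. g (x(i := c)) \<partial>D \<partial>(Pi\<^sub>M I' (\<lambda>_. D)))"
    by (simp add: nn_integral_const D.emeasure_space_1)
  finally show ?thesis using 1 by simp
qed

lemma E_b:
  "(\<integral>\<^sup>+\<omega>. ennreal (f (A (dataset_Si n i \<omega>)) (fst \<omega> i)) \<partial>(P \<Otimes>\<^sub>M P))
   = (\<integral>\<^sup>+x. \<integral>\<^sup>+a. ennreal (f (A (map x [0..<n])) a) \<partial>D \<partial>P)"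
proof -
  interpret D: prob_space D by (rule D)
  interpret PP: prob_space P using D by (intro prob_space_PiM) auto
  interpret PPP: pair_sigma_finite P P by unfold_locales
  interpret DD: pair_sigma_finite D D by unfold_locales
  have bm: "(\<lambda>\<omega>. ennreal (f (A (dataset_Si n i \<omega>)) (fst \<omega> i))) \<in> borel_measurable (P \<Otimes>\<^sub>M P)"
    using b_meas by measurable
  have "(\<integral>\<^sup>+\<omega>. ennreal (f (A (dataset_Si n i \<omega>)) (fst \<omega> i)) \<partial>(P \<Otimes>\<^sub>M P))
     = (\<integral>\<^sup>+x. \<integral>\<^sup>+y. ennreal (f (A (map (x(i := y i)) [0..<n])) (x i)) \<partial>P \<partial>P)"
    using PP.nn_integral_fst[OF bm, symmetric] by (simp add: dataset_Si_def map_upt_update[OF i])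
  also have "\<dots> = (\<integral>\<^sup>+x. \<integral>\<^sup>+c. ennreal (f (A (map (x(i := c)) [0..<n])) (x i)) \<partial>D \<partial>P)"
  proof (rule nn_integral_cong)
    fix x assume x: "x \<in> space P"
    have m: "(\<lambda>c. ennreal (f (A (map (x(i := c)) [0..<n])) (x i))) \<in> borel_measurable D"
      using upd1_meas[OF x] x by measurable
    have "(\<integral>\<^sup>+c. ennreal (f (A (map (x(i := c)) [0..<n])) (x i)) \<partial>D)
      = (\<integral>\<^sup>+c. ennreal (f (A (map (x(i := c)) [0..<n])) (x i)) \<partial>distr P D (\<lambda>y. y i))"
      using distr_PiM_component[of "{..<n}" "\<lambda>j. D" i] D i by simp
    also have "\<dots> = (\<integral>\<^sup>+y. ennreal (f (A (map (x(i := y i)) [0..<n])) (x i)) \<partial>P)"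
      using m by (simp add: nn_integral_distr)
    finally show "(\<integral>\<^sup>+y. ennreal (f (A (map (x(i := y i)) [0..<n])) (x i)) \<partial>P)
      = (\<integral>\<^sup>+c. ennreal (f (A (map (x(i := c)) [0..<n])) (x i)) \<partial>D)" by simp
  qed
  also have "\<dots> = (\<integral>\<^sup>+x. \<integral>\<^sup>+a. \<integral>\<^sup>+c. ennreal (f (A (map (x(i := c)) [0..<n])) a) \<partial>D \<partial>D \<partial>P)"
  proof -
    have gm: "(\<lambda>x. \<integral>\<^sup>+c. ennreal (f (A (map (x(i := c)) [0..<n])) (x i)) \<partial>D) \<in> borel_measurable P"
    proof -
      have "(\<lambda>(x, c). ennreal (f (A (map (x(i := c)) [0..<n])) (x i))) \<in> borel_measurable (P \<Otimes>\<^sub>M D)"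
      proof -
        have "(\<lambda>xc. A (map ((\<lambda>(x, c). x(i := c)) xc) [0..<n])) \<in> borel_measurable (P \<Otimes>\<^sub>M D)"
          using measurable_compose[OF upd_meas AS_meas] by simp
        then show ?thesis by (simp add: split_beta') measurable
      qed
      then show ?thesis by measurable
    qed
    show ?thesis using resample[OF gm, symmetric] by simp
  qed
  also have "\<dots> = (\<integral>\<^sup>+x. \<integral>\<^sup>+c. \<integral>\<^sup>+a. ennreal (f (A (map (x(i := c)) [0..<n])) a) \<partial>D \<partial>D \<partial>P)"
  proof (rule nn_integral_cong)
    fix x assume x: "x \<in> space P"
    have "(\<lambda>(a, c). ennreal (f (A (map (x(i := c)) [0..<n])) a)) \<in> borel_measurable (D \<Otimes>\<^sub>M D)"
    proof -
      have "(\<lambda>c. A (map (x(i := c)) [0..<n])) \<in> borel_measurable D"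
        using measurable_compose[OF upd1_meas[OF x] AS_meas] by simp
      then have "(\<lambda>ac. A (map (x(i := snd ac)) [0..<n])) \<in> borel_measurable (D \<Otimes>\<^sub>M D)"
        by measurable
      then show ?thesis by (simp add: split_beta') measurable
    qed
    then show "(\<integral>\<^sup>+a. \<integral>\<^sup>+c. ennreal (f (A (map (x(i := c)) [0..<n])) a) \<partial>D \<partial>D)
      = (\<integral>\<^sup>+c. \<integral>\<^sup>+a. ennreal (f (A (map (x(i := c)) [0..<n])) a) \<partial>D \<partial>D)"
      by (rule DD.Fubini'[symmetric])
  qed
  also have "\<dots> = (\<integral>\<^sup>+x. \<integral>\<^sup>+a. ennreal (f (A (map x [0..<n])) a) \<partial>D \<partial>P)"
  proof -
    have qm: "(\<lambda>x. \<integral>\<^sup>+a. ennreal (f (A (map x [0..<n])) a) \<partial>D) \<in> borel_measurable P"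
      by measurable
    show ?thesis using resample[OF qm] by simp
  qed
  finally show ?thesis .
qed

lemma E_sym:
  assumes symm: "symmetric_alg A" and j: "j < n"
  shows "(\<integral>x. f (A (map x [0..<n])) (x j) \<partial>P) = (\<integral>x. f (A (map x [0..<n])) (x i) \<partial>P)"
proof -
  define \<tau> where "\<tau> k = (if k = i then j else if k = j then i else k)" for k
  have inj: "inj_on \<tau> {..<n}" unfolding \<tau>_def inj_on_def by auto
  have into: "\<tau> \<in> {..<n} \<rightarrow> {..<n}" unfolding \<tau>_def using i j by auto
  have img: "\<tau> ` {..<n} = {..<n}"
  proof
    show "\<tau> ` {..<n} \<subseteq> {..<n}" using into by auto
    show "{..<n} \<subseteq> \<tau> ` {..<n}"
    proof
      fix k assume k: "k \<in> {..<n}"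
      have "\<tau> (\<tau> k) = k" unfolding \<tau>_def by auto
      moreover have "\<tau> k \<in> {..<n}" using into k by auto
      ultimately show "k \<in> \<tau> ` {..<n}" by (metis image_eqI)
    qed
  qed
  define T where "T \<omega> = (\<lambda>k\<in>{..<n}. \<omega> (\<tau> k))" for \<omega> :: "nat \<Rightarrow> 'z"
  have dist: "distr P P T = P"
    using distr_PiM_reindex[of "{..<n}" "\<lambda>_. D" \<tau> "{..<n}"] D inj into unfolding T_def by simp
  have Tm: "T \<in> measurable P P"
  proof -
    have "(\<lambda>\<omega>. \<lambda>k\<in>{..<n}. \<omega> (\<tau> k)) \<in> measurable P P"
      using into by (intro measurable_restrict) (auto intro!: measurable_component_singleton)
    then show ?thesis unfolding T_def .
  qed
  have gm: "(\<lambda>x. f (A (map x [0..<n])) (x i)) \<in> borel_measurable P" by measurable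
  have "(\<integral>x. f (A (map x [0..<n])) (x i) \<partial>P) = (\<integral>x. f (A (map x [0..<n])) (x i) \<partial>distr P P T)"
    using dist by simp
  also have "\<dots> = (\<integral>x. f (A (map (T x) [0..<n])) (T x i) \<partial>P)"
    by (rule integral_distr[OF Tm gm])
  also have "\<dots> = (\<integral>x. f (A (map x [0..<n])) (x j) \<partial>P)"
  proof (rule Bochner_Integration.integral_cong[OF refl])
    fix x
    have Ti: "T x i = x j" unfolding T_def \<tau>_def using i by simp
    have "map (T x) [0..<n] = map (x \<circ> \<tau>) [0..<n]"
      unfolding T_def by (rule map_cong) auto
    then have "mset (map (T x) [0..<n]) = image_mset x (image_mset \<tau> (mset [0..<n]))"
      by (simp only: mset_map multiset.map_comp)
    also have "image_mset \<tau> (mset [0..<n]) = mset_set (\<tau> ` {..<n})"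
      using inj by (simp add: image_mset_mset_set atLeast0LessThan[symmetric] mset_upt)
    also have "\<dots> = mset [0..<n]" using img by (simp add: mset_upt atLeast0LessThan)
    finally have "mset (map (T x) [0..<n]) = mset (map x [0..<n])" by simp
    then have "A (map (T x) [0..<n]) = A (map x [0..<n])"
      using symm unfolding symmetric_alg_def by blast
    then show "f (A (map (T x) [0..<n])) (T x i) = f (A (map x [0..<n])) (x j)" using Ti by simp
  qed
  finally show ?thesis by simp
qed

end


lemma emp_risk_map: "emp_risk f (map x [0..<n]) w = (\<Sum>j<n. f w (x j)) / real n"
proof -
  have "(\<Sum>z\<leftarrow>map x [0..<n]. f w z) = (\<Sum>j\<leftarrow>[0..<n]. f w (x j))"
    by (simp add: comp_def)
  also have "\<dots> = (\<Sum>j\<in>set [0..<n]. f w (x j))"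
    by (rule sum_set_upt_conv_sum_list_nat[symmetric])
  also have "\<dots> = (\<Sum>j<n. f w (x j))" by (simp add: atLeast0LessThan)
  finally show ?thesis unfolding emp_risk_def by simp
qed

lemma (in setting) int_fst:
  fixes g :: "(nat \<Rightarrow> 'z) \<Rightarrow> real"
  assumes g: "g \<in> borel_measurable P"
  shows "(\<integral>\<omega>. g (fst \<omega>) \<partial>(P \<Otimes>\<^sub>M P)) = integral\<^sup>L P g"
proof -
  interpret PP: prob_space P using D by (intro prob_space_PiM) (auto simp: prob_space.prob_space)
  have "integral\<^sup>L P g = integral\<^sup>L (distr (P \<Otimes>\<^sub>M P) P fst) g" using PP.distr_pair_fst[of P] by simp
  also have "\<dots> = (\<integral>\<omega>. g (fst \<omega>) \<partial>(P \<Otimes>\<^sub>M P))" using integral_distr[OF measurable_fst[of P P], of g] g by simp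
  finally show ?thesis by simp
qed

lemma (in setting) nn_int_fst:
  assumes g: "g \<in> borel_measurable P"
  shows "(\<integral>\<^sup>+\<omega>. g (fst \<omega>) \<partial>(P \<Otimes>\<^sub>M P)) = integral\<^sup>N P g"
proof -
  interpret PP: prob_space P using D by (intro prob_space_PiM) (auto simp: prob_space.prob_space)
  have "integral\<^sup>N P g = integral\<^sup>N (distr (P \<Otimes>\<^sub>M P) P fst) g" using PP.distr_pair_fst[of P] by simp
  also have "\<dots> = (\<integral>\<^sup>+\<omega>. g (fst \<omega>) \<partial>(P \<Otimes>\<^sub>M P))" using nn_integral_distr[OF measurable_fst[of P P], of g] g by simp
  finally show ?thesis by simp
qed

theorem corollary5:
  fixes D :: "'z measure" and f :: "'a::euclidean_space \<Rightarrow> 'z \<Rightarrow> real"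
    and A :: "'z list \<Rightarrow> 'a" and W :: "'z list \<Rightarrow> 'a"
    and n i :: nat and \<beta> :: real
  assumes D: "prob_space D"
    and i: "i < n"
    and nonneg: "\<And>w z. f w z \<ge> 0"
    and sm: "\<And>z. smooth \<beta> (\<lambda>w. f w z)"
    and symm: "symmetric_alg A"
    and W_min: "\<And>xs w. length xs = n \<Longrightarrow> emp_risk f xs (W xs) \<le> emp_risk f xs w"
    and f_meas: "(\<lambda>(w, z). f w z) \<in> borel_measurable (borel \<Otimes>\<^sub>M D)"
    and A_meas: "(\<lambda>s. A (map s [0..<n])) \<in> borel_measurable (\<Pi>\<^sub>M j\<in>{..<n}. D)"
    and W_meas: "(\<lambda>s. emp_risk f (map s [0..<n]) (W (map s [0..<n])))
                   \<in> borel_measurable (\<Pi>\<^sub>M j\<in>{..<n}. D)"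
    and int_R: "integrable (sample_space D n) (\<lambda>\<omega>. pop_risk D f (A (dataset_S n \<omega>)))"
    and int_RS: "integrable (sample_space D n)
                   (\<lambda>\<omega>. emp_risk f (dataset_S n \<omega>) (A (dataset_S n \<omega>)))"
    and int_stab: "integrable (sample_space D n)
                   (\<lambda>\<omega>. (norm (A (dataset_S n \<omega>) - A (dataset_Si n i \<omega>)))\<^sup>2)"
    and memo: "eps_c D f W n = 0"
  shows "\<bar>eps_gen D f A n\<bar> \<le> 2 * sqrt (2 * \<beta> * eps_opt D f A W n * eps_stab D A n i)
             + 2 * \<beta> * eps_stab D A n i
         \<and> \<bar>eps_gen D f A n\<bar> \<le> (2 * sqrt (2 * \<beta>) + 2 * \<beta>)
             * max (sqrt (eps_opt D f A W n * eps_stab D A n i)) (eps_stab D A n i)"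
proof -
  interpret setting D f A n i by (rule setting.intro[OF D i f_meas A_meas])
  interpret DD: prob_space D by (rule D)
  interpret PP: prob_space "\<Pi>\<^sub>M j\<in>{..<n}. D" using D by (intro prob_space_PiM) auto
  let ?P = "\<Pi>\<^sub>M j\<in>{..<n}. D"
  let ?M = "?P \<Otimes>\<^sub>M ?P"
  have M: "sample_space D n = ?M" by (simp add: sample_space_def)
  interpret MM: prob_space ?M by (rule prob_space_pair) unfold_locales
  have b0: "0 \<le> \<beta>" using smooth_beta_nonneg[OF sm] .
  have n0: "n > 0" using i by simp
  define a where "a \<omega> = f (A (dataset_S n \<omega>)) (fst \<omega> i)" for \<omega>
  define b where "b \<omega> = f (A (dataset_Si n i \<omega>)) (fst \<omega> i)" for \<omega>
  define d where "d \<omega> = (norm (A (dataset_S n \<omega>) - A (dataset_Si n i \<omega>)))\<^sup>2" for \<omega>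
  define RS where "RS \<omega> = emp_risk f (dataset_S n \<omega>) (A (dataset_S n \<omega>))" for \<omega>
  define RW where "RW \<omega> = emp_risk f (dataset_S n \<omega>) (W (dataset_S n \<omega>))" for \<omega>
  define R where "R \<omega> = pop_risk D f (A (dataset_S n \<omega>))" for \<omega>
  have int_RS': "integrable ?M RS" using int_RS M unfolding RS_def by simp
  have int_R': "integrable ?M R" using int_R M unfolding R_def by simp
  have int_d: "integrable ?M d" using int_stab M unfolding d_def by simp
  have RS_sum: "RS \<omega> = (\<Sum>j<n. f (A (dataset_S n \<omega>)) (fst \<omega> j)) / real n" for \<omega>
    unfolding RS_def dataset_S_def by (rule emp_risk_map)
  have aj_meas: "(\<lambda>\<omega>. f (A (dataset_S n \<omega>)) (fst \<omega> j)) \<in> borel_measurable ?M" if "j < n" for j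
  proof -
    have "(\<lambda>x. x j) \<in> measurable ?P D" using that by (intro measurable_component_singleton) auto
    then have "(\<lambda>x. f (A (map x [0..<n])) (x j)) \<in> borel_measurable ?P" by measurable
    then show ?thesis unfolding dataset_S_def by measurable
  qed
  have aj_le: "f (A (dataset_S n \<omega>)) (fst \<omega> j) \<le> real n * RS \<omega>" if "j < n" for j \<omega>
  proof -
    have "f (A (dataset_S n \<omega>)) (fst \<omega> j) \<le> (\<Sum>j<n. f (A (dataset_S n \<omega>)) (fst \<omega> j))"
      using that nonneg by (intro member_le_sum) auto
    then show ?thesis using RS_sum[of \<omega>] n0 by simp
  qed
  have aj_int: "integrable ?M (\<lambda>\<omega>. f (A (dataset_S n \<omega>)) (fst \<omega> j))" if "j < n" for j
  proof (rule Bochner_Integration.integrable_bound[OF integrable_mult_right[OF int_RS', of "real n"] aj_meas[OF that]])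
    show "AE \<omega> in ?M. norm (f (A (dataset_S n \<omega>)) (fst \<omega> j)) \<le> norm (real n * RS \<omega>)"
    proof (rule AE_I2)
      fix \<omega>
      have "f (A (dataset_S n \<omega>)) (fst \<omega> j) \<le> real n * RS \<omega>" by (rule aj_le[OF that])
      then show "norm (f (A (dataset_S n \<omega>)) (fst \<omega> j)) \<le> norm (real n * RS \<omega>)"
        using nonneg[of "A (dataset_S n \<omega>)" "fst \<omega> j"] by simp
    qed
  qed
  have a_int: "integrable ?M a" unfolding a_def using aj_int[OF i] .
  have a_meas: "a \<in> borel_measurable ?M" unfolding a_def using aj_meas[OF i] .
  have b_meas': "b \<in> borel_measurable ?M" unfolding b_def using b_meas .
  have up: "b \<omega> - a \<omega> \<le> l * \<beta> * a \<omega> + (1 / (2 * l) + \<beta> / 2) * d \<omega>" if "l > 0" for l \<omega>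
    using smooth_key[OF sm nonneg that, of "A (dataset_Si n i \<omega>)" "fst \<omega> i" "A (dataset_S n \<omega>)"]
    unfolding a_def b_def d_def by (simp add: norm_minus_commute)
  have lo: "a \<omega> - b \<omega> \<le> l * \<beta> * b \<omega> + (1 / (2 * l) + \<beta> / 2) * d \<omega>" if "l > 0" for l \<omega>
    using smooth_key[OF sm nonneg that, of "A (dataset_S n \<omega>)" "fst \<omega> i" "A (dataset_Si n i \<omega>)"]
    unfolding a_def b_def d_def by simp
  have b_int: "integrable ?M b"
  proof (rule Bochner_Integration.integrable_bound[where f="\<lambda>\<omega>. (1 + \<beta>) * a \<omega> + (1 / 2 + \<beta> / 2) * d \<omega>"])
    show "integrable ?M (\<lambda>\<omega>. (1 + \<beta>) * a \<omega> + (1 / 2 + \<beta> / 2) * d \<omega>)"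
      using a_int int_d by simp
    show "b \<in> borel_measurable ?M" by (rule b_meas')
    show "AE \<omega> in ?M. norm (b \<omega>) \<le> norm ((1 + \<beta>) * a \<omega> + (1 / 2 + \<beta> / 2) * d \<omega>)"
    proof (rule AE_I2)
      fix \<omega>
      have "b \<omega> \<le> (1 + \<beta>) * a \<omega> + (1 / 2 + \<beta> / 2) * d \<omega>"
        using up[of 1 \<omega>] by (simp add: algebra_simps)
      moreover have "0 \<le> b \<omega>" unfolding b_def by (rule nonneg)
      ultimately show "norm (b \<omega>) \<le> norm ((1 + \<beta>) * a \<omega> + (1 / 2 + \<beta> / 2) * d \<omega>)" by simp
    qed
  qed
  define R0 where "R0 x = pop_risk D f (A (map x [0..<n]))" for x
  have R0m: "R0 \<in> borel_measurable ?P" unfolding R0_def pop_risk_def by measurable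
  have RR0: "R \<omega> = R0 (fst \<omega>)" for \<omega> unfolding R_def R0_def dataset_S_def by simp
  define Q where "Q x = (\<integral>\<^sup>+a. ennreal (f (A (map x [0..<n])) a) \<partial>D)" for x
  have Qm: "Q \<in> borel_measurable ?P" unfolding Q_def by measurable
  have Eb: "(\<integral>\<^sup>+\<omega>. ennreal (b \<omega>) \<partial>?M) = integral\<^sup>N ?P Q" unfolding b_def Q_def by (rule E_b)
  have bfin: "(\<integral>\<^sup>+\<omega>. ennreal (b \<omega>) \<partial>?M) = ennreal (integral\<^sup>L ?M b)"
    by (rule nn_integral_eq_integral[OF b_int]) (simp add: b_def nonneg)
  have QE: "integral\<^sup>N ?P Q = ennreal (integral\<^sup>L ?M b)" using Eb bfin by simp
  have AEQ: "AE x in ?P. Q x \<noteq> \<infinity>" by (rule nn_integral_PInf_AE[OF Qm]) (simp add: QE)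
  have QR: "AE x in ?P. Q x = ennreal (R0 x)"
    using AEQ AE_space
  proof eventually_elim
    case (elim x)
    have fm: "(\<lambda>a. f (A (map x [0..<n])) a) \<in> borel_measurable D" by measurable
    have int: "integrable D (\<lambda>a. f (A (map x [0..<n])) a)"
      by (rule integrableI_bounded[OF fm]) (use elim nonneg in \<open>simp add: Q_def top.not_eq_extremum\<close>)
    show ?case unfolding Q_def R0_def pop_risk_def by (rule nn_integral_eq_integral[OF int]) (simp add: nonneg)
  qed
  have "(\<integral>\<^sup>+\<omega>. ennreal (R \<omega>) \<partial>?M) = (\<integral>\<^sup>+x. ennreal (R0 x) \<partial>?P)"
    unfolding RR0 by (rule nn_int_fst) (use R0m in measurable)
  also have "\<dots> = integral\<^sup>N ?P Q" using QR by (intro nn_integral_cong_AE) (auto elim: AE_mp)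
  finally have nnRb: "(\<integral>\<^sup>+\<omega>. ennreal (R \<omega>) \<partial>?M) = (\<integral>\<^sup>+\<omega>. ennreal (b \<omega>) \<partial>?M)" using Eb by simp
  have R_nonneg: "0 \<le> R \<omega>" for \<omega> unfolding R_def pop_risk_def by (rule integral_nonneg_AE) (simp add: nonneg)
  have intRb: "integral\<^sup>L ?M R = integral\<^sup>L ?M b"
    using integral_eq_nn_integral[of R ?M] integral_eq_nn_integral[of b ?M] nnRb
      borel_measurable_integrable[OF int_R'] b_meas' R_nonneg nonneg by (simp add: b_def)
  have Ej: "integral\<^sup>L ?M (\<lambda>\<omega>. f (A (dataset_S n \<omega>)) (fst \<omega> j)) = integral\<^sup>L ?M a" if j: "j < n" for j
  proof -
    have mj: "(\<lambda>x. x j) \<in> measurable ?P D" using j by (intro measurable_component_singleton) auto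
    have gj: "(\<lambda>x. f (A (map x [0..<n])) (x j)) \<in> borel_measurable ?P" using mj by measurable
    have gi: "(\<lambda>x. f (A (map x [0..<n])) (x i)) \<in> borel_measurable ?P" by measurable
    have "integral\<^sup>L ?M (\<lambda>\<omega>. f (A (dataset_S n \<omega>)) (fst \<omega> j)) = (\<integral>x. f (A (map x [0..<n])) (x j) \<partial>?P)"
      unfolding dataset_S_def by (rule int_fst[OF gj])
    also have "\<dots> = (\<integral>x. f (A (map x [0..<n])) (x i) \<partial>?P)" by (rule E_sym[OF symm j])
    also have "\<dots> = integral\<^sup>L ?M a" unfolding a_def dataset_S_def by (rule int_fst[OF gi, symmetric])
    finally show ?thesis .
  qed
  have intRSa: "integral\<^sup>L ?M RS = integral\<^sup>L ?M a"
  proof -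
    have "integral\<^sup>L ?M RS = (\<Sum>j<n. integral\<^sup>L ?M (\<lambda>\<omega>. f (A (dataset_S n \<omega>)) (fst \<omega> j))) / real n"
      unfolding RS_sum by (simp add: integral_sum aj_int)
    also have "\<dots> = integral\<^sup>L ?M a" using Ej n0 by simp
    finally show ?thesis .
  qed
  have RW_meas: "RW \<in> borel_measurable ?M"
    using measurable_compose[OF measurable_fst[of ?P ?P] W_meas] unfolding RW_def dataset_S_def by simp
  have RW_nn: "0 \<le> RW \<omega>" for \<omega>
    unfolding RW_def dataset_S_def emp_risk_map using nonneg by (simp add: sum_nonneg)
  have RW_le: "RW \<omega> \<le> RS \<omega>" for \<omega>
    unfolding RW_def RS_def by (rule W_min) (simp add: dataset_S_def)
  have RW_int: "integrable ?M RW"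
    by (rule Bochner_Integration.integrable_bound[OF int_RS' RW_meas], rule AE_I2) (use RW_nn RW_le in \<open>simp, meson abs_ge_self order_trans\<close>)
  have opt: "eps_opt D f A W n = integral\<^sup>L ?M a"
  proof -
    have "eps_opt D f A W n = integral\<^sup>L ?M (\<lambda>\<omega>. RS \<omega> - RW \<omega>)"
      unfolding eps_opt_def M RS_def RW_def ..
    also have "\<dots> = integral\<^sup>L ?M RS - integral\<^sup>L ?M RW" using int_RS' RW_int by simp
    also have "integral\<^sup>L ?M RW = 0" using memo unfolding eps_c_def M RW_def by simp
    finally show ?thesis using intRSa by simp
  qed
  have gen: "eps_gen D f A n = integral\<^sup>L ?M b - integral\<^sup>L ?M a"
  proof -
    have "eps_gen D f A n = integral\<^sup>L ?M (\<lambda>\<omega>. R \<omega> - RS \<omega>)"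
      unfolding eps_gen_def M RS_def R_def ..
    also have "\<dots> = integral\<^sup>L ?M R - integral\<^sup>L ?M RS" using int_RS' int_R' by simp
    finally show ?thesis using intRSa intRb by simp
  qed
  have stab: "eps_stab D A n i = integral\<^sup>L ?M d" unfolding eps_stab_def M d_def ..
  have Iup: "integral\<^sup>L ?M b - integral\<^sup>L ?M a \<le> l * \<beta> * integral\<^sup>L ?M a + (1 / (2 * l) + \<beta> / 2) * integral\<^sup>L ?M d"
    if l: "l > 0" for l
  proof -
    have "integral\<^sup>L ?M b \<le> integral\<^sup>L ?M (\<lambda>\<omega>. (1 + l * \<beta>) * a \<omega> + (1 / (2 * l) + \<beta> / 2) * d \<omega>)"
      by (rule integral_mono) (use b_int a_int int_d up[OF l] in \<open>auto simp: algebra_simps\<close>)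
    also have "\<dots> = (1 + l * \<beta>) * integral\<^sup>L ?M a + (1 / (2 * l) + \<beta> / 2) * integral\<^sup>L ?M d"
      using a_int int_d by simp
    finally show ?thesis by (simp add: algebra_simps)
  qed
  have Ilo: "integral\<^sup>L ?M a - integral\<^sup>L ?M b \<le> l * \<beta> * integral\<^sup>L ?M b + (1 / (2 * l) + \<beta> / 2) * integral\<^sup>L ?M d"
    if l: "l > 0" for l
  proof -
    have "integral\<^sup>L ?M a \<le> integral\<^sup>L ?M (\<lambda>\<omega>. (1 + l * \<beta>) * b \<omega> + (1 / (2 * l) + \<beta> / 2) * d \<omega>)"
      by (rule integral_mono) (use b_int a_int int_d lo[OF l] in \<open>auto simp: algebra_simps\<close>)
    also have "\<dots> = (1 + l * \<beta>) * integral\<^sup>L ?M b + (1 / (2 * l) + \<beta> / 2) * integral\<^sup>L ?M d"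
      using b_int int_d by simp
    finally show ?thesis by (simp add: algebra_simps)
  qed
  have o0: "0 \<le> eps_opt D f A W n" unfolding opt a_def by (rule integral_nonneg_AE) (simp add: nonneg)
  have s0: "0 \<le> eps_stab D A n i" unfolding stab d_def by (rule integral_nonneg_AE) simp
  have H: "\<bar>eps_gen D f A n\<bar> \<le> l * \<beta> * eps_opt D f A W n + (1 / (2 * l) + \<beta> / 2) * eps_stab D A n i"
    if l: "l > 0" for l
  proof (cases "eps_gen D f A n \<ge> 0")
    case True
    then show ?thesis using Iup[OF l] unfolding gen opt stab by simp
  next
    case False
    have lb: "0 \<le> l * \<beta>" using l b0 by simp
    have "l * \<beta> * integral\<^sup>L ?M b \<le> l * \<beta> * integral\<^sup>L ?M a"
      using False lb unfolding gen by (intro mult_left_mono) auto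
    then show ?thesis using False Ilo[OF l] unfolding gen opt stab by simp
  qed
  have 1: "\<bar>eps_gen D f A n\<bar> \<le> 2 * sqrt (2 * \<beta> * eps_opt D f A W n * eps_stab D A n i) + 2 * \<beta> * eps_stab D A n i"
    by (rule final_real[OF b0 o0 s0 H])
  show ?thesis using 1 final_max[OF b0 o0 s0] by simp
qed


end
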